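(* Let $(M,\varphi,\xi,\eta,g)$ be a $3$-dimensional $f$-Kenmotsu manifold and let $\gamma(s):I\to M$ be a non-geodesic, arc-length parametrized Frenet curve with Frenet frame $\{T,N,B\}$, curvature $k_1=k_1(s)$ and torsion $k_2=k_2(s)$. Put $A:=\frac{r}{2}+2(f^2+f')$ and $\Lambda:=\frac{r}{2}+3(f^2+f')$. Then $\gamma$ is a triharmonic curve if and only if \begin{align*} &k_1k_1'''+2k_1'k_1''-2k_1^3k_1'-k_2^2k_1k_1'-k_1^2k_2k_2'=0,\\ &k_1^{(4)}-10k_1^2k_1''-6k_2^2k_1''-4k_1k_2k_2''-15k_1(k_1')^2-12k_2k_2'k_1'-3k_1(k_2')^2+k_1^5+k_1k_2^4+2k_1^3k_2^2\\ &\quad+(k_1''-2k_1^3-k_1k_2^2)\big(A-\Lambda(\eta(T)^2+\eta(N)^2)\big)-\big(k_1^2k_2\eta(T)+(2k_2k_1'+k_1k_2')\eta(N)\big)\Lambda\,\eta(B)=0,\\ &4k_2k_1'''+6k_1''k_2'+4k_1'k_2''-9k_1^2k_2k_1'-4k_2^3k_1'-6k_1k_2^2k_2'-k_2'k_1^3+k_1k_2'''\\ &\quad+(2k_1'k_2+k_1k_2')\big(A-\Lambda(\eta(T)^2+\eta(B)^2)\big)+\big(k_1^2k_2\eta(T)-(k_1''-2k_1^3-k_1k_2^2)\eta(B)\big)\Lambda\,\eta(N)=0. \end{align*}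
   Context: An almost contact metric manifold $(M^{2n+1},\varphi,\xi,\eta,g)$ has a $(1,1)$-tensor $\varphi$, vector field $\xi$, $1$-form $\eta$ and Riemannian metric $g$ with $\varphi^2=-I+\eta\otimes\xi$, $\eta(\xi)=1$, $\varphi\xi=0$, $\eta\circ\varphi=0$, $\eta(X)=g(X,\xi)$, $g(\varphi X,\varphi Y)=g(X,Y)-\eta(X)\eta(Y)$. It is an $f$-Kenmotsu manifold if the Levi-Civita connection satisfies $(\nabla_X\varphi)Y=f(g(\varphi X,Y)\xi-\eta(Y)\varphi X)$ and $\nabla_X\xi=f(X-\eta(X)\xi)$ for a smooth function $f$ with $df\wedge\eta=0$. In dimension 3 its curvature tensor is $R(X,Y)Z=(\frac r2+2(f^2+f'))(g(Y,Z)X-g(X,Z)Y)-(\frac r2+3(f^2+f'))(g(Y,Z)\eta(X)\xi-g(X,Z)\eta(Y)\xi-\eta(X)\eta(Z)Y+\eta(Y)\eta(Z)X)$, where $r$ is the scalar curvature and $f'$ denotes the derivative of $f$; along the curve $f,f',r$ are regarded as functions of the arc-length $s$. A Frenet curve satisfies $\nabla_TT=k_1N$, $\nabla_TN=-k_1T+k_2B$, $\nabla_TB=-k_2N$, $T=\gamma'$. An arc-length parametrized curve is triharmonic if $\tau_3(\gamma):=\nabla_T^5T+R(\nabla_T^3T,T)T-R(\nabla_T^2T,\nabla_TT)T=0$. Primes on $k_1,k_2$ denote derivatives in $s$. *)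

theory Defs
  imports "HOL-Analysis.Analysis"
begin

text \<open>Vector fields along the curve are represented in a parallel orthonormal frame
  along the curve, i.e. as functions from the parameter interval to real^3 with the
  induced metric being the dot product; the covariant derivative along the curve
  nabla_T then becomes the ordinary derivative.\<close>

definition vd :: "(real \<Rightarrow> real^3) \<Rightarrow> real \<Rightarrow> real^3" where
  "vd V = (\<lambda>t. vector_derivative V (at t))"

text \<open>Curvature tensor of a 3-dimensional f-Kenmotsu manifold at a point with
  scalar curvature r, function value f, derivative value fp and Reeb field xi.\<close>
definition kenmotsu_curv ::
  "real \<Rightarrow> real \<Rightarrow> real \<Rightarrow> real^3 \<Rightarrow> real^3 \<Rightarrow> real^3 \<Rightarrow> real^3 \<Rightarrow> real^3" where
  "kenmotsu_curv r f fp xi X Y Z =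
     (r/2 + 2*(f^2 + fp)) *\<^sub>R ((Y \<bullet> Z) *\<^sub>R X - (X \<bullet> Z) *\<^sub>R Y)
   - (r/2 + 3*(f^2 + fp)) *\<^sub>R
       (((Y \<bullet> Z) * (X \<bullet> xi)) *\<^sub>R xi - ((X \<bullet> Z) * (Y \<bullet> xi)) *\<^sub>R xi
        - ((X \<bullet> xi) * (Z \<bullet> xi)) *\<^sub>R Y + ((Y \<bullet> xi) * (Z \<bullet> xi)) *\<^sub>R X)"

definition triharmonic ::
  "real set \<Rightarrow> (real \<Rightarrow> real^3) \<Rightarrow> (real \<Rightarrow> real^3 \<Rightarrow> real^3 \<Rightarrow> real^3 \<Rightarrow> real^3) \<Rightarrow> bool" where
  "triharmonic I T Rm \<longleftrightarrow>
     (\<forall>s\<in>I. (vd^^5) T s + Rm s ((vd^^3) T s) (T s) (T s)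
              - Rm s ((vd^^2) T s) ((vd^^1) T s) (T s) = 0)"

end

theory Submission
  imports Defs
begin

lemma step:
  fixes T N B :: "real \<Rightarrow> real^3"
  assumes "(T has_vector_derivative k *\<^sub>R N s) (at s)"
    "(N has_vector_derivative (- k *\<^sub>R T s + k' *\<^sub>R B s)) (at s)"
    "(B has_vector_derivative (- k' *\<^sub>R N s)) (at s)"
    "(a has_real_derivative a') (at s)"
    "(b has_real_derivative b') (at s)"
    "(c has_real_derivative c') (at s)"
    "a' = A + k * b s" "b' = Bc - k * a s + k' * c s" "c' = C - k' * b s"
  shows "((\<lambda>t. a t *\<^sub>R T t + b t *\<^sub>R N t + c t *\<^sub>R B t) has_vector_derivative
           (A *\<^sub>R T s + Bc *\<^sub>R N s + C *\<^sub>R B s)) (at s)"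
proof -
  have "((\<lambda>t. a t *\<^sub>R T t + b t *\<^sub>R N t + c t *\<^sub>R B t) has_vector_derivative
     (a s *\<^sub>R (k *\<^sub>R N s) + (A + k * b s) *\<^sub>R T s) + (b s *\<^sub>R (- k *\<^sub>R T s + k' *\<^sub>R B s) + (Bc - k * a s + k' * c s) *\<^sub>R N s)
      + (c s *\<^sub>R (- k' *\<^sub>R N s) + (C - k' * b s) *\<^sub>R B s)) (at s)"
    using assms(1-6) unfolding assms(7-9) by (intro has_vector_derivative_add has_vector_derivative_scaleR)
  moreover have "(a s *\<^sub>R (k *\<^sub>R N s) + (A + k * b s) *\<^sub>R T s) + (b s *\<^sub>R (- k *\<^sub>R T s + k' *\<^sub>R B s) + (Bc - k * a s + k' * c s) *\<^sub>R N s)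
      + (c s *\<^sub>R (- k' *\<^sub>R N s) + (C - k' * b s) *\<^sub>R B s) = A *\<^sub>R T s + Bc *\<^sub>R N s + C *\<^sub>R B s"
    by (simp add: algebra_simps)
  ultimately show ?thesis by simp
qed

lemma basis3:
  fixes t n b v :: "real^3"
  assumes "t \<bullet> t = 1" "n \<bullet> n = 1" "b \<bullet> b = 1" "t \<bullet> n = 0" "t \<bullet> b = 0" "n \<bullet> b = 0"
  shows "v = 0 \<longleftrightarrow> v \<bullet> t = 0 \<and> v \<bullet> n = 0 \<and> v \<bullet> b = 0"
proof
  assume "v \<bullet> t = 0 \<and> v \<bullet> n = 0 \<and> v \<bullet> b = 0"
  then have h: "v \<bullet> t = 0" "v \<bullet> n = 0" "v \<bullet> b = 0" by auto
  show "v = 0"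
  proof (rule ccontr)
    assume v0: "v \<noteq> 0"
    let ?S = "{t, n, b, v}"
    have nz: "t \<noteq> 0" "n \<noteq> 0" "b \<noteq> 0" using assms by auto
    have ne: "t \<noteq> n" "t \<noteq> b" "n \<noteq> b" "v \<noteq> t" "v \<noteq> n" "v \<noteq> b"
      using assms h v0 by (auto simp: inner_commute)
    have "pairwise orthogonal ?S"
      using assms h by (auto simp: pairwise_def orthogonal_def inner_commute)
    moreover have "0 \<notin> ?S" using nz v0 by auto
    ultimately have "independent ?S" by (rule pairwise_orthogonal_independent)
    then have "card ?S \<le> DIM(real^3)" using independent_bound by blast
    moreover have "card ?S = 4" using ne by auto
    ultimately show False by simp
  qed
qed simp

lemma final_alg:
  fixes t n b xi :: "real^3" and x xa xb xc xd y ya yb yc rr ff fp eT eN eB :: real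
  assumes o: "t \<bullet> t = 1" "n \<bullet> n = 1" "b \<bullet> b = 1" "t \<bullet> n = 0" "t \<bullet> b = 0" "n \<bullet> b = 0"
    and e: "t \<bullet> xi = eT" "n \<bullet> xi = eN" "b \<bullet> xi = eB"
  defines "X1 \<equiv> 0 *\<^sub>R t + x *\<^sub>R n + 0 *\<^sub>R b"
    and "X2 \<equiv> (- (x^2)) *\<^sub>R t + xa *\<^sub>R n + (x * y) *\<^sub>R b"
    and "X3 \<equiv> (-3 * x * xa) *\<^sub>R t
        + (xb - x * y^2 - x^3) *\<^sub>R n + (2 * xa * y + x * ya) *\<^sub>R b"
    and "X5 \<equiv> (-10*xa*xb - 5*x*xc + 5*x*xa*y^2 + 5*x^2*y*ya + 10*x^3*xa) *\<^sub>R t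
      + (xd - 6*xb*y^2 - 12*xa*y*ya - 3*x*ya^2 - 4*x*y*yb + x*y^4
         - 15*x*xa^2 - 10*x^2*xb + 2*x^3*y^2 + x^5) *\<^sub>R n
      + (4*xc*y + 6*xb*ya + 4*xa*yb - 4*xa*y^3 + x*yc
         - 6*x*y^2*ya - 9*x^2*xa*y - x^3*ya) *\<^sub>R b"
    and "a \<equiv> rr / 2 + 2 * (ff^2 + fp)" and "l \<equiv> rr / 2 + 3 * (ff^2 + fp)"
  defines "tau \<equiv> X5 + kenmotsu_curv rr ff fp xi X3 t t - kenmotsu_curv rr ff fp xi X2 X1 t"
  shows "tau \<bullet> t = -5 * (x*xc + 2*xa*xb - 2*x^3*xa - y^2*x*xa - x^2*y*ya)"
    and "tau \<bullet> n = xd - 10*x^2*xb - 6*y^2*xb - 4*x*y*yb - 15*x*xa^2 - 12*y*ya*xa - 3*x*ya^2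
           + x^5 + x*y^4 + 2*x^3*y^2
           + (xb - 2*x^3 - x*y^2) * (a - l * (eT^2 + eN^2))
           - (x^2*y*eT + (2*y*xa + x*ya)*eN) * l * eB"
    and "tau \<bullet> b = 4*y*xc + 6*xb*ya + 4*xa*yb - 9*x^2*y*xa - 4*y^3*xa - 6*x*y^2*ya - ya*x^3 + x*yc
           + (2*xa*y + x*ya) * (a - l * (eT^2 + eB^2))
           + (x^2*y*eT - (xb - 2*x^3 - x*y^2)*eB) * l * eN"
proof -
  have o2: "n \<bullet> t = 0" "b \<bullet> t = 0" "b \<bullet> n = 0" "xi \<bullet> t = eT" "xi \<bullet> n = eN" "xi \<bullet> b = eB"
    using o e by (simp_all add: inner_commute)
  note ss = tau_def X1_def X2_def X3_def X5_def a_def l_def kenmotsu_curv_def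
    inner_add_left inner_add_right inner_diff_left inner_diff_right inner_scaleR_left
    inner_scaleR_right inner_minus_left inner_minus_right o o2 e
  show "tau \<bullet> t = -5 * (x*xc + 2*xa*xb - 2*x^3*xa - y^2*x*xa - x^2*y*ya)"
    by (simp only: ss) (simp add: algebra_simps power2_eq_square power3_eq_cube eval_nat_numeral)
  show "tau \<bullet> n = xd - 10*x^2*xb - 6*y^2*xb - 4*x*y*yb - 15*x*xa^2 - 12*y*ya*xa - 3*x*ya^2
           + x^5 + x*y^4 + 2*x^3*y^2
           + (xb - 2*x^3 - x*y^2) * (a - l * (eT^2 + eN^2))
           - (x^2*y*eT + (2*y*xa + x*ya)*eN) * l * eB"
    by (simp only: ss) (simp add: algebra_simps power2_eq_square power3_eq_cube eval_nat_numeral)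
  show "tau \<bullet> b = 4*y*xc + 6*xb*ya + 4*xa*yb - 9*x^2*y*xa - 4*y^3*xa - 6*x*y^2*ya - ya*x^3 + x*yc
           + (2*xa*y + x*ya) * (a - l * (eT^2 + eB^2))
           + (x^2*y*eT - (xb - 2*x^3 - x*y^2)*eB) * l * eN"
    by (simp only: ss) (simp add: algebra_simps power2_eq_square power3_eq_cube eval_nat_numeral)
qed

lemma ballI_all: "(\<And>j s. s \<in> I \<Longrightarrow> P j s) \<Longrightarrow> \<forall>j. \<forall>s\<in>I. P j s"
  by blast

lemma lev:
  assumes "open I" "s \<in> I" "\<And>t. t \<in> I \<Longrightarrow> V t = F t"
    "(F has_vector_derivative W) (at s)"
  shows "vd V s = W"
  unfolding vd_def
  by (rule vector_derivative_at, rule has_vector_derivative_transform_within_open[OF assms(4,1,2)])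
     (simp add: assms(3))

lemma pow45: "(x::real)^4 = x*x*x*x" "(x::real)^5 = x*x*x*x*x"
  by (simp_all add: eval_nat_numeral)

lemma natnum: "Suc (Suc 0) = 2" "Suc (Suc (Suc 0)) = 3" "Suc (Suc (Suc (Suc 0))) = 4"
  by simp_all

lemma vdS: "m = Suc n \<Longrightarrow> (vd^^m) T t = vd ((vd^^n) T) t"
  by simp

lemma levels:
  fixes T N B :: "real \<Rightarrow> real^3" and p q :: "nat \<Rightarrow> real \<Rightarrow> real"
  assumes I: "open I"
    and Dp0: "\<forall>j. \<forall>s\<in>I. (p j has_real_derivative p (Suc j) s) (at s)"
    and Dq0: "\<forall>j. \<forall>s\<in>I. (q j has_real_derivative q (Suc j) s) (at s)"
    and fT0: "\<forall>s\<in>I. (T has_vector_derivative p 0 s *\<^sub>R N s) (at s)"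
    and fN0: "\<forall>s\<in>I. (N has_vector_derivative (- p 0 s *\<^sub>R T s + q 0 s *\<^sub>R B s)) (at s)"
    and fB0: "\<forall>s\<in>I. (B has_vector_derivative (- q 0 s *\<^sub>R N s)) (at s)"
  shows L1: "\<And>t. t \<in> I \<Longrightarrow> (vd^^1) T t = 0 *\<^sub>R T t + p 0 t *\<^sub>R N t + 0 *\<^sub>R B t"
    and L2: "\<And>t. t \<in> I \<Longrightarrow> (vd^^2) T t = (- (p 0 t^2)) *\<^sub>R T t + p 1 t *\<^sub>R N t + (p 0 t * q 0 t) *\<^sub>R B t"
    and L3: "\<And>t. t \<in> I \<Longrightarrow> (vd^^3) T t = (-3 * p 0 t * p 1 t) *\<^sub>R T t
        + (p 2 t - p 0 t * q 0 t^2 - p 0 t^3) *\<^sub>R N t + (2 * p 1 t * q 0 t + p 0 t * q 1 t) *\<^sub>R B t"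
    and L4: "\<And>t. t \<in> I \<Longrightarrow> (vd^^4) T t = (-3*p 1 t^2 - 4*p 0 t*p 2 t + p 0 t^2*q 0 t^2 + p 0 t^4) *\<^sub>R T t
        + (p 3 t - 3*p 1 t*q 0 t^2 - 3*p 0 t*q 0 t*q 1 t - 6*p 0 t^2*p 1 t) *\<^sub>R N t
        + (3*p 2 t*q 0 t + 3*p 1 t*q 1 t + p 0 t*q 2 t - p 0 t*q 0 t^3 - p 0 t^3*q 0 t) *\<^sub>R B t"
    and L5: "\<And>t. t \<in> I \<Longrightarrow> (vd^^5) T t =
        (-10*p 1 t*p 2 t - 5*p 0 t*p 3 t + 5*p 0 t*p 1 t*q 0 t^2 + 5*p 0 t^2*q 0 t*q 1 t + 10*p 0 t^3*p 1 t) *\<^sub>R T t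
      + (p 4 t - 6*p 2 t*q 0 t^2 - 12*p 1 t*q 0 t*q 1 t - 3*p 0 t*q 1 t^2 - 4*p 0 t*q 0 t*q 2 t + p 0 t*q 0 t^4
         - 15*p 0 t*p 1 t^2 - 10*p 0 t^2*p 2 t + 2*p 0 t^3*q 0 t^2 + p 0 t^5) *\<^sub>R N t
      + (4*p 3 t*q 0 t + 6*p 2 t*q 1 t + 4*p 1 t*q 2 t - 4*p 1 t*q 0 t^3 + p 0 t*q 3 t
         - 6*p 0 t*q 0 t^2*q 1 t - 9*p 0 t^2*p 1 t*q 0 t - p 0 t^3*q 1 t) *\<^sub>R B t"
proof -
  have Dp: "\<And>j s. s \<in> I \<Longrightarrow> (p j has_real_derivative p (Suc j) s) (at s)"
    using Dp0 by blast
  have Dq: "\<And>j s. s \<in> I \<Longrightarrow> (q j has_real_derivative q (Suc j) s) (at s)"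
    using Dq0 by blast
  have fT: "\<And>s. s \<in> I \<Longrightarrow> (T has_vector_derivative p 0 s *\<^sub>R N s) (at s)"
    using fT0 by blast
  have fN: "\<And>s. s \<in> I \<Longrightarrow> (N has_vector_derivative (- p 0 s *\<^sub>R T s + q 0 s *\<^sub>R B s)) (at s)"
    using fN0 by blast
  have fB: "\<And>s. s \<in> I \<Longrightarrow> (B has_vector_derivative (- q 0 s *\<^sub>R N s)) (at s)"
    using fB0 by blast
  have Dp': "\<And>j s D. s \<in> I \<Longrightarrow> D = p (j+1) s \<Longrightarrow> (p j has_real_derivative D) (at s)"
    using Dp by simp
  have Dq': "\<And>j s D. s \<in> I \<Longrightarrow> D = q (j+1) s \<Longrightarrow> (q j has_real_derivative D) (at s)"
    using Dq by simp
  have Dp2: "\<And>j s. s \<in> I \<Longrightarrow> (p j has_real_derivative p (j+1) s) (at s)"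
    using Dp by simp
  have Dq2: "\<And>j s. s \<in> I \<Longrightarrow> (q j has_real_derivative q (j+1) s) (at s)"
    using Dq by simp
  show L1: "\<And>t. t \<in> I \<Longrightarrow> (vd^^1) T t = 0 *\<^sub>R T t + p 0 t *\<^sub>R N t + 0 *\<^sub>R B t"
  proof -
    fix t assume t: "t \<in> I"
    have "vd T t = 0 *\<^sub>R T t + p 0 t *\<^sub>R N t + 0 *\<^sub>R B t"
      by (rule lev[OF I t, where F="\<lambda>t. 1 *\<^sub>R T t + 0 *\<^sub>R N t + 0 *\<^sub>R B t"], simp)
         (rule step[OF fT[OF t] fN[OF t] fB[OF t]], (rule Dp2 Dq2 t | rule derivative_eq_intros | rule refl)+, simp_all add: algebra_simps power2_eq_square power3_eq_cube pow45 natnum)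
    then show "(vd^^1) T t = 0 *\<^sub>R T t + p 0 t *\<^sub>R N t + 0 *\<^sub>R B t" by simp
  qed
  show L2: "\<And>t. t \<in> I \<Longrightarrow> (vd^^2) T t = (- (p 0 t^2)) *\<^sub>R T t + p 1 t *\<^sub>R N t + (p 0 t * q 0 t) *\<^sub>R B t"
  proof -
    fix t assume t: "t \<in> I"
    have "vd ((vd^^1) T) t = (- (p 0 t^2)) *\<^sub>R T t + p 1 t *\<^sub>R N t + (p 0 t * q 0 t) *\<^sub>R B t"
      by (rule lev[OF I t L1], assumption)
         (rule step[OF fT[OF t] fN[OF t] fB[OF t]], (rule Dp2 Dq2 t | rule derivative_eq_intros | rule refl)+, simp_all add: algebra_simps power2_eq_square power3_eq_cube pow45 natnum)
    then show "(vd^^2) T t = (- (p 0 t^2)) *\<^sub>R T t + p 1 t *\<^sub>R N t + (p 0 t * q 0 t) *\<^sub>R B t" using vdS[of 2 1 T t] by simp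
  qed
  show L3: "\<And>t. t \<in> I \<Longrightarrow> (vd^^3) T t = (-3 * p 0 t * p 1 t) *\<^sub>R T t
        + (p 2 t - p 0 t * q 0 t^2 - p 0 t^3) *\<^sub>R N t + (2 * p 1 t * q 0 t + p 0 t * q 1 t) *\<^sub>R B t"
  proof -
    fix t assume t: "t \<in> I"
    have "vd ((vd^^2) T) t = (-3 * p 0 t * p 1 t) *\<^sub>R T t
        + (p 2 t - p 0 t * q 0 t^2 - p 0 t^3) *\<^sub>R N t + (2 * p 1 t * q 0 t + p 0 t * q 1 t) *\<^sub>R B t"
      by (rule lev[OF I t L2], assumption)
         (rule step[OF fT[OF t] fN[OF t] fB[OF t]], (rule Dp2 Dq2 t | rule derivative_eq_intros | rule refl)+, simp_all add: algebra_simps power2_eq_square power3_eq_cube pow45 natnum)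
    then show "(vd^^3) T t = (-3 * p 0 t * p 1 t) *\<^sub>R T t
        + (p 2 t - p 0 t * q 0 t^2 - p 0 t^3) *\<^sub>R N t + (2 * p 1 t * q 0 t + p 0 t * q 1 t) *\<^sub>R B t" using vdS[of 3 2 T t] by simp
  qed
  show L4: "\<And>t. t \<in> I \<Longrightarrow> (vd^^4) T t = (-3*p 1 t^2 - 4*p 0 t*p 2 t + p 0 t^2*q 0 t^2 + p 0 t^4) *\<^sub>R T t
        + (p 3 t - 3*p 1 t*q 0 t^2 - 3*p 0 t*q 0 t*q 1 t - 6*p 0 t^2*p 1 t) *\<^sub>R N t
        + (3*p 2 t*q 0 t + 3*p 1 t*q 1 t + p 0 t*q 2 t - p 0 t*q 0 t^3 - p 0 t^3*q 0 t) *\<^sub>R B t"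
  proof -
    fix t assume t: "t \<in> I"
    have "vd ((vd^^3) T) t = (-3*p 1 t^2 - 4*p 0 t*p 2 t + p 0 t^2*q 0 t^2 + p 0 t^4) *\<^sub>R T t
        + (p 3 t - 3*p 1 t*q 0 t^2 - 3*p 0 t*q 0 t*q 1 t - 6*p 0 t^2*p 1 t) *\<^sub>R N t
        + (3*p 2 t*q 0 t + 3*p 1 t*q 1 t + p 0 t*q 2 t - p 0 t*q 0 t^3 - p 0 t^3*q 0 t) *\<^sub>R B t"
      by (rule lev[OF I t L3], assumption)
         (rule step[OF fT[OF t] fN[OF t] fB[OF t]], (rule Dp2 Dq2 t | rule derivative_eq_intros | rule refl)+, simp_all add: algebra_simps power2_eq_square power3_eq_cube pow45 natnum)
    then show "(vd^^4) T t = (-3*p 1 t^2 - 4*p 0 t*p 2 t + p 0 t^2*q 0 t^2 + p 0 t^4) *\<^sub>R T t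
        + (p 3 t - 3*p 1 t*q 0 t^2 - 3*p 0 t*q 0 t*q 1 t - 6*p 0 t^2*p 1 t) *\<^sub>R N t
        + (3*p 2 t*q 0 t + 3*p 1 t*q 1 t + p 0 t*q 2 t - p 0 t*q 0 t^3 - p 0 t^3*q 0 t) *\<^sub>R B t" using vdS[of 4 3 T t] by simp
  qed
  show L5: "\<And>t. t \<in> I \<Longrightarrow> (vd^^5) T t = (-10*p 1 t*p 2 t - 5*p 0 t*p 3 t + 5*p 0 t*p 1 t*q 0 t^2 + 5*p 0 t^2*q 0 t*q 1 t + 10*p 0 t^3*p 1 t) *\<^sub>R T t
      + (p 4 t - 6*p 2 t*q 0 t^2 - 12*p 1 t*q 0 t*q 1 t - 3*p 0 t*q 1 t^2 - 4*p 0 t*q 0 t*q 2 t + p 0 t*q 0 t^4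
         - 15*p 0 t*p 1 t^2 - 10*p 0 t^2*p 2 t + 2*p 0 t^3*q 0 t^2 + p 0 t^5) *\<^sub>R N t
      + (4*p 3 t*q 0 t + 6*p 2 t*q 1 t + 4*p 1 t*q 2 t - 4*p 1 t*q 0 t^3 + p 0 t*q 3 t
         - 6*p 0 t*q 0 t^2*q 1 t - 9*p 0 t^2*p 1 t*q 0 t - p 0 t^3*q 1 t) *\<^sub>R B t"
  proof -
    fix t assume t: "t \<in> I"
    have "vd ((vd^^4) T) t = (-10*p 1 t*p 2 t - 5*p 0 t*p 3 t + 5*p 0 t*p 1 t*q 0 t^2 + 5*p 0 t^2*q 0 t*q 1 t + 10*p 0 t^3*p 1 t) *\<^sub>R T t
      + (p 4 t - 6*p 2 t*q 0 t^2 - 12*p 1 t*q 0 t*q 1 t - 3*p 0 t*q 1 t^2 - 4*p 0 t*q 0 t*q 2 t + p 0 t*q 0 t^4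
         - 15*p 0 t*p 1 t^2 - 10*p 0 t^2*p 2 t + 2*p 0 t^3*q 0 t^2 + p 0 t^5) *\<^sub>R N t
      + (4*p 3 t*q 0 t + 6*p 2 t*q 1 t + 4*p 1 t*q 2 t - 4*p 1 t*q 0 t^3 + p 0 t*q 3 t
         - 6*p 0 t*q 0 t^2*q 1 t - 9*p 0 t^2*p 1 t*q 0 t - p 0 t^3*q 1 t) *\<^sub>R B t"
      by (rule lev[OF I t L4], assumption)
         (rule step[OF fT[OF t] fN[OF t] fB[OF t]], (rule Dp2 Dq2 t | rule derivative_eq_intros | rule refl)+, simp_all add: algebra_simps power2_eq_square power3_eq_cube pow45 natnum)
    then show "(vd^^5) T t = (-10*p 1 t*p 2 t - 5*p 0 t*p 3 t + 5*p 0 t*p 1 t*q 0 t^2 + 5*p 0 t^2*q 0 t*q 1 t + 10*p 0 t^3*p 1 t) *\<^sub>R T t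
      + (p 4 t - 6*p 2 t*q 0 t^2 - 12*p 1 t*q 0 t*q 1 t - 3*p 0 t*q 1 t^2 - 4*p 0 t*q 0 t*q 2 t + p 0 t*q 0 t^4
         - 15*p 0 t*p 1 t^2 - 10*p 0 t^2*p 2 t + 2*p 0 t^3*q 0 t^2 + p 0 t^5) *\<^sub>R N t
      + (4*p 3 t*q 0 t + 6*p 2 t*q 1 t + 4*p 1 t*q 2 t - 4*p 1 t*q 0 t^3 + p 0 t*q 3 t
         - 6*p 0 t*q 0 t^2*q 1 t - 9*p 0 t^2*p 1 t*q 0 t - p 0 t^3*q 1 t) *\<^sub>R B t" using vdS[of 5 4 T t] by simp
  qed
qed

theorem theorem1:
  fixes I :: "real set"
    and T N B xi :: "real \<Rightarrow> real^3"
    and k1 k2 r f fp :: "real \<Rightarrow> real"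
    and Rm :: "real \<Rightarrow> real^3 \<Rightarrow> real^3 \<Rightarrow> real^3 \<Rightarrow> real^3"
  assumes I: "open I" "is_interval I" "I \<noteq> {}"
    and smooth1: "\<And>n s. s \<in> I \<Longrightarrow> ((deriv^^n) k1 has_real_derivative (deriv^^(Suc n)) k1 s) (at s)"
    and smooth2: "\<And>n s. s \<in> I \<Longrightarrow> ((deriv^^n) k2 has_real_derivative (deriv^^(Suc n)) k2 s) (at s)"
    and nongeod: "\<And>s. s \<in> I \<Longrightarrow> k1 s > 0"
    and orth: "\<And>s. s \<in> I \<Longrightarrow> T s \<bullet> T s = 1 \<and> N s \<bullet> N s = 1 \<and> B s \<bullet> B s = 1
                 \<and> T s \<bullet> N s = 0 \<and> T s \<bullet> B s = 0 \<and> N s \<bullet> B s = 0"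
    and frenetT: "\<And>s. s \<in> I \<Longrightarrow> (T has_vector_derivative k1 s *\<^sub>R N s) (at s)"
    and frenetN: "\<And>s. s \<in> I \<Longrightarrow> (N has_vector_derivative (- k1 s *\<^sub>R T s + k2 s *\<^sub>R B s)) (at s)"
    and frenetB: "\<And>s. s \<in> I \<Longrightarrow> (B has_vector_derivative (- k2 s *\<^sub>R N s)) (at s)"
    and xi_unit: "\<And>s. s \<in> I \<Longrightarrow> xi s \<bullet> xi s = 1"
    and xi_deriv: "\<And>s. s \<in> I \<Longrightarrow>
          (xi has_vector_derivative f s *\<^sub>R (T s - (T s \<bullet> xi s) *\<^sub>R xi s)) (at s)"
    and curv: "\<And>s X Y Z. s \<in> I \<Longrightarrow> Rm s X Y Z = kenmotsu_curv (r s) (f s) (fp s) (xi s) X Y Z"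
  shows "triharmonic I T Rm \<longleftrightarrow>
    (\<forall>s\<in>I.
      let a = r s / 2 + 2 * ((f s)^2 + fp s);
          l = r s / 2 + 3 * ((f s)^2 + fp s);
          eT = T s \<bullet> xi s; eN = N s \<bullet> xi s; eB = B s \<bullet> xi s;
          x = k1 s; x1 = deriv k1 s; x2 = (deriv^^2) k1 s; x3 = (deriv^^3) k1 s;
          x4 = (deriv^^4) k1 s;
          y = k2 s; y1 = deriv k2 s; y2 = (deriv^^2) k2 s; y3 = (deriv^^3) k2 s
      in x*x3 + 2*x1*x2 - 2*x^3*x1 - y^2*x*x1 - x^2*y*y1 = 0
       \<and> x4 - 10*x^2*x2 - 6*y^2*x2 - 4*x*y*y2 - 15*x*x1^2 - 12*y*y1*x1 - 3*x*y1^2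
           + x^5 + x*y^4 + 2*x^3*y^2
           + (x2 - 2*x^3 - x*y^2) * (a - l * (eT^2 + eN^2))
           - (x^2*y*eT + (2*y*x1 + x*y1)*eN) * l * eB = 0
       \<and> 4*y*x3 + 6*x2*y1 + 4*x1*y2 - 9*x^2*y*x1 - 4*y^3*x1 - 6*x*y^2*y1 - y1*x^3 + x*y3
           + (2*x1*y + x*y1) * (a - l * (eT^2 + eB^2))
           + (x^2*y*eT - (x2 - 2*x^3 - x*y^2)*eB) * l * eN = 0)"
proof -
  define p where "p = (\<lambda>j. (deriv^^j) k1)"
  define q where "q = (\<lambda>j. (deriv^^j) k2)"
  have Dp: "\<And>j s. s \<in> I \<Longrightarrow> (p j has_real_derivative p (Suc j) s) (at s)"
    unfolding p_def using smooth1 by simp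
  have Dq: "\<And>j s. s \<in> I \<Longrightarrow> (q j has_real_derivative q (Suc j) s) (at s)"
    unfolding q_def using smooth2 by simp
  have p0: "\<And>s. p 0 s = k1 s" and q0: "\<And>s. q 0 s = k2 s" by (simp_all add: p_def q_def)
  have fT: "\<And>s. s \<in> I \<Longrightarrow> (T has_vector_derivative p 0 s *\<^sub>R N s) (at s)"
    using frenetT by (simp add: p0)
  have fN: "\<And>s. s \<in> I \<Longrightarrow> (N has_vector_derivative (- p 0 s *\<^sub>R T s + q 0 s *\<^sub>R B s)) (at s)"
    using frenetN by (simp add: p0 q0)
  have fB: "\<And>s. s \<in> I \<Longrightarrow> (B has_vector_derivative (- q 0 s *\<^sub>R N s)) (at s)"
    using frenetB by (simp add: q0)
  have Dp0: "\<forall>j. \<forall>s\<in>I. (p j has_real_derivative p (Suc j) s) (at s)" using Dp by blast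
  have Dq0: "\<forall>j. \<forall>s\<in>I. (q j has_real_derivative q (Suc j) s) (at s)" using Dq by blast
  have fT0: "\<forall>s\<in>I. (T has_vector_derivative p 0 s *\<^sub>R N s) (at s)" using fT by blast
  have fN0: "\<forall>s\<in>I. (N has_vector_derivative (- p 0 s *\<^sub>R T s + q 0 s *\<^sub>R B s)) (at s)" using fN by blast
  have fB0: "\<forall>s\<in>I. (B has_vector_derivative (- q 0 s *\<^sub>R N s)) (at s)" using fB by blast
  note L = levels[OF I(1) Dp0 Dq0 fT0 fN0 fB0]
  have key: "((vd^^5) T s + Rm s ((vd^^3) T s) (T s) (T s) - Rm s ((vd^^2) T s) ((vd^^1) T s) (T s) = 0)
    \<longleftrightarrow> (let
          a = r s / 2 + 2 * ((f s)^2 + fp s);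
          l = r s / 2 + 3 * ((f s)^2 + fp s);
          eT = T s \<bullet> xi s; eN = N s \<bullet> xi s; eB = B s \<bullet> xi s;
          x = k1 s; x1 = deriv k1 s; x2 = (deriv^^2) k1 s; x3 = (deriv^^3) k1 s;
          x4 = (deriv^^4) k1 s;
          y = k2 s; y1 = deriv k2 s; y2 = (deriv^^2) k2 s; y3 = (deriv^^3) k2 s
      in x*x3 + 2*x1*x2 - 2*x^3*x1 - y^2*x*x1 - x^2*y*y1 = 0
       \<and> x4 - 10*x^2*x2 - 6*y^2*x2 - 4*x*y*y2 - 15*x*x1^2 - 12*y*y1*x1 - 3*x*y1^2
           + x^5 + x*y^4 + 2*x^3*y^2
           + (x2 - 2*x^3 - x*y^2) * (a - l * (eT^2 + eN^2))
           - (x^2*y*eT + (2*y*x1 + x*y1)*eN) * l * eB = 0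
       \<and> 4*y*x3 + 6*x2*y1 + 4*x1*y2 - 9*x^2*y*x1 - 4*y^3*x1 - 6*x*y^2*y1 - y1*x^3 + x*y3
           + (2*x1*y + x*y1) * (a - l * (eT^2 + eB^2))
           + (x^2*y*eT - (x2 - 2*x^3 - x*y^2)*eB) * l * eN = 0)"
    if s: "s \<in> I" for s
  proof -
    note o = orth[OF s]
    note FA = final_alg[where t="T s" and n="N s" and b="B s" and xi="xi s"
        and eT="T s \<bullet> xi s" and eN="N s \<bullet> xi s" and eB="B s \<bullet> xi s"
        and x="p 0 s" and xa="p 1 s" and xb="p 2 s" and xc="p 3 s" and xd="p 4 s"
        and y="q 0 s" and ya="q 1 s" and yb="q 2 s" and yc="q 3 s"
        and rr="r s" and ff="f s" and fp="fp s"]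
    note FA' = FA[OF o[THEN conjunct1] o[THEN conjunct2, THEN conjunct1]
       o[THEN conjunct2, THEN conjunct2, THEN conjunct1]
       o[THEN conjunct2, THEN conjunct2, THEN conjunct2, THEN conjunct1]
       o[THEN conjunct2, THEN conjunct2, THEN conjunct2, THEN conjunct2, THEN conjunct1]
       o[THEN conjunct2, THEN conjunct2, THEN conjunct2, THEN conjunct2, THEN conjunct2] refl refl refl]
    let ?tau = "(vd^^5) T s + Rm s ((vd^^3) T s) (T s) (T s) - Rm s ((vd^^2) T s) ((vd^^1) T s) (T s)"
    have d1: "?tau \<bullet> T s = -5 * (p 0 s * p 3 s + 2 * p 1 s * p 2 s - 2 * p 0 s ^ 3 * p 1 s
        - q 0 s ^ 2 * p 0 s * p 1 s - p 0 s ^ 2 * q 0 s * q 1 s)"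
      unfolding L(1-5)[OF s] curv[OF s] by (rule FA'(1))
    have d2: "?tau \<bullet> N s = p 4 s - 10*p 0 s^2*p 2 s - 6*q 0 s^2*p 2 s - 4*p 0 s*q 0 s*q 2 s
           - 15*p 0 s*p 1 s^2 - 12*q 0 s*q 1 s*p 1 s - 3*p 0 s*q 1 s^2
           + p 0 s^5 + p 0 s*q 0 s^4 + 2*p 0 s^3*q 0 s^2
           + (p 2 s - 2*p 0 s^3 - p 0 s*q 0 s^2) * ((r s / 2 + 2 * ((f s)^2 + fp s))
              - (r s / 2 + 3 * ((f s)^2 + fp s)) * ((T s \<bullet> xi s)^2 + (N s \<bullet> xi s)^2))
           - (p 0 s^2*q 0 s*(T s \<bullet> xi s) + (2*q 0 s*p 1 s + p 0 s*q 1 s)*(N s \<bullet> xi s))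
              * (r s / 2 + 3 * ((f s)^2 + fp s)) * (B s \<bullet> xi s)"
      unfolding L(1-5)[OF s] curv[OF s] by (rule FA'(2))
    have d3: "?tau \<bullet> B s = 4*q 0 s*p 3 s + 6*p 2 s*q 1 s + 4*p 1 s*q 2 s - 9*p 0 s^2*q 0 s*p 1 s
           - 4*q 0 s^3*p 1 s - 6*p 0 s*q 0 s^2*q 1 s - q 1 s*p 0 s^3 + p 0 s*q 3 s
           + (2*p 1 s*q 0 s + p 0 s*q 1 s) * ((r s / 2 + 2 * ((f s)^2 + fp s))
              - (r s / 2 + 3 * ((f s)^2 + fp s)) * ((T s \<bullet> xi s)^2 + (B s \<bullet> xi s)^2))
           + (p 0 s^2*q 0 s*(T s \<bullet> xi s) - (p 2 s - 2*p 0 s^3 - p 0 s*q 0 s^2)*(B s \<bullet> xi s))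
              * (r s / 2 + 3 * ((f s)^2 + fp s)) * (N s \<bullet> xi s)"
      unfolding L(1-5)[OF s] curv[OF s] by (rule FA'(3))
    have b: "?tau = 0 \<longleftrightarrow> ?tau \<bullet> T s = 0 \<and> ?tau \<bullet> N s = 0 \<and> ?tau \<bullet> B s = 0"
      using o by (intro basis3) auto
    have m5: "\<And>z::real. (-5 * z = 0) = (z = 0)" by simp
    have pr: "p 0 s = k1 s" "p 1 s = deriv k1 s" "p 2 s = (deriv^^2) k1 s" "p 3 s = (deriv^^3) k1 s"
      "p 4 s = (deriv^^4) k1 s" "q 0 s = k2 s" "q 1 s = deriv k2 s" "q 2 s = (deriv^^2) k2 s"
      "q 3 s = (deriv^^3) k2 s" by (simp_all add: p_def q_def)
    show ?thesis
      unfolding b d1 d2 d3 Let_def m5 pr by (rule refl)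
  qed
  show ?thesis unfolding triharmonic_def using key by blast
qed

end
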